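(* Let $R$ be a ring with unity and involution $*$, and let $a\in R$ be Moore-Penrose invertible with Moore-Penrose inverse $a^{\dagger}$. Then there exist $a_1,a_2\in R$ with $aa^*=a_1+a_2$ such that (1) $a_1$ is left dual core invertible, (2) $a_2^2=0$, (3) $a_2^*a_1=0=a_1a_2$. In addition, $a^*a$ is left dual core invertible and $a^{\dagger}(a^{\dagger})^*$ is a left dual core inverse of $a^*a$.
   Context: The Moore-Penrose inverse $a^\dagger$ is the unique $x\in R$ with $axa=a$, $xax=x$, $(ax)^*=ax$, $(xa)^*=xa$. An element $y$ is left dual core invertible if there exists $z\in R$ with $yzy=y$, $(zy)^*=zy$ and $z^2y=z$; such $z$ is a left dual core inverse of $y$. *)

theory Defs
  imports Main
begin

definition involution :: "('a::ring_1 \<Rightarrow> 'a) \<Rightarrow> bool" where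
  "involution s \<longleftrightarrow>
     (\<forall>x. s (s x) = x) \<and> (\<forall>x y. s (x + y) = s x + s y) \<and> (\<forall>x y. s (x * y) = s y * s x)"

definition is_MP_inverse :: "('a::ring_1 \<Rightarrow> 'a) \<Rightarrow> 'a \<Rightarrow> 'a \<Rightarrow> bool" where
  "is_MP_inverse s a x \<longleftrightarrow>
     a * x * a = a \<and> x * a * x = x \<and> s (a * x) = a * x \<and> s (x * a) = x * a"

definition MP_invertible :: "('a::ring_1 \<Rightarrow> 'a) \<Rightarrow> 'a \<Rightarrow> bool" where
  "MP_invertible s a \<longleftrightarrow> (\<exists>x. is_MP_inverse s a x)"

definition MP_inv :: "('a::ring_1 \<Rightarrow> 'a) \<Rightarrow> 'a \<Rightarrow> 'a" where
  "MP_inv s a = (THE x. is_MP_inverse s a x)"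

definition is_left_dual_core_inverse :: "('a::ring_1 \<Rightarrow> 'a) \<Rightarrow> 'a \<Rightarrow> 'a \<Rightarrow> bool" where
  "is_left_dual_core_inverse s y z \<longleftrightarrow>
     y * z * y = y \<and> s (z * y) = z * y \<and> z * z * y = z"

definition left_dual_core_invertible :: "('a::ring_1 \<Rightarrow> 'a) \<Rightarrow> 'a \<Rightarrow> bool" where
  "left_dual_core_invertible s y \<longleftrightarrow> (\<exists>z. is_left_dual_core_inverse s y z)"

end

theory Submission
  imports Defs
begin

lemma MP_unique:
  fixes s :: "'a::ring_1 \<Rightarrow> 'a"
  assumes inv: "involution s" and x: "is_MP_inverse s a x" and y: "is_MP_inverse s a y"
  shows "x = y"
proof -
  have ss: "\<And>u. s (s u) = u" and sm: "\<And>u v. s (u * v) = s v * s u"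
    using inv unfolding involution_def by auto
  have x1: "a * x * a = a" and x2: "x * a * x = x" and x3: "s (a * x) = a * x" and x4: "s (x * a) = x * a"
    using x unfolding is_MP_inverse_def by auto
  have y1: "a * y * a = a" and y2: "y * a * y = y" and y3: "s (a * y) = a * y" and y4: "s (y * a) = y * a"
    using y unfolding is_MP_inverse_def by auto
  have "x = x * (a * x)" using x2 by (simp add: mult.assoc)
  also have "\<dots> = x * s (a * x)" using x3 by simp
  also have "\<dots> = x * (s x * s a)" by (simp add: sm)
  also have "s a = s (a * y * a)" using y1 by simp
  also have "\<dots> = s a * s y * s a" by (simp add: sm mult.assoc)
  also have "x * (s x * (s a * s y * s a)) = x * (s (a * x) * s (a * y))" by (simp add: sm mult.assoc)
  also have "\<dots> = x * (a * x * (a * y))" using x3 y3 by (simp add: mult.assoc)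
  also have "\<dots> = x * a * y" using x2 by (metis mult.assoc)
  finally have ex: "x = x * a * y" .
  have "y = (y * a) * y" using y2 by (simp add: mult.assoc)
  also have "\<dots> = s (y * a) * y" using y4 by simp
  also have "\<dots> = s a * s y * y" by (simp add: sm)
  also have "s a = s (a * x * a)" using x1 by simp
  also have "\<dots> = s a * s x * s a" by (simp add: sm mult.assoc)
  also have "s a * s x * s a * s y * y = s (x * a) * s (y * a) * y" by (simp add: sm mult.assoc)
  also have "\<dots> = x * a * (y * a) * y" using x4 y4 by simp
  also have "\<dots> = x * a * y" using y2 by (simp add: mult.assoc)
  finally show ?thesis using ex by simp
qed

theorem corollary3p15:
  fixes s :: "'a::ring_1 \<Rightarrow> 'a" and a :: 'a
  assumes "involution s"
    and "MP_invertible s a"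
  shows "(\<exists>a1 a2. a * s a = a1 + a2 \<and> left_dual_core_invertible s a1 \<and> a2 * a2 = 0
            \<and> s a2 * a1 = 0 \<and> a1 * a2 = 0)
         \<and> left_dual_core_invertible s (s a * a)
         \<and> is_left_dual_core_inverse s (s a * a) (MP_inv s a * s (MP_inv s a))"
proof -
  have ss: "\<And>u. s (s u) = u" and sm: "\<And>u v. s (u * v) = s v * s u"
    using assms(1) unfolding involution_def by auto
  have s0: "s 0 = 0"
  proof -
    have "s (0 + 0) = s 0 + s 0" using assms(1) unfolding involution_def by blast
    then show ?thesis by simp
  qed
  obtain x where x: "is_MP_inverse s a x" using assms(2) unfolding MP_invertible_def by blast
  have xe: "MP_inv s a = x" unfolding MP_inv_def
    using x MP_unique[OF assms(1)] by blast
  have x1: "a * x * a = a" and x2: "x * a * x = x" and x3: "s (a * x) = a * x" and x4: "s (x * a) = x * a"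
    using x unfolding is_MP_inverse_def by auto
  have p1: "s x * s a = a * x" using x3 sm by metis
  have p2: "s a * s x = x * a" using x4 sm by metis
  have q1: "x * a * s a = s a"
  proof -
    have "s (a * x * a) = s a" using x1 by simp
    then show ?thesis using x4 sm by (metis mult.assoc)
  qed
  have q2: "s a * a * x = s a"
  proof -
    have "s (a * x * a) = s a" using x1 by simp
    then show ?thesis using x3 by (simp add: sm mult.assoc)
  qed
  have q3: "s x * x * a = s x"
  proof -
    have "s (x * a * x) = s x" using x2 by simp
    then show ?thesis using x4 by (simp add: sm mult.assoc)
  qed
  have q4: "a * x * s x = s x"
  proof -
    have "s (x * a * x) = s x" using x2 by simp
    then show ?thesis using x3 sm by (metis mult.assoc)
  qed
  have L1: "is_left_dual_core_inverse s (a * s a) (s x * x)"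
  proof -
    have e1: "(s x * x) * (a * s a) = a * x"
      by (metis mult.assoc q1 p1)
    show ?thesis unfolding is_left_dual_core_inverse_def
    proof (intro conjI)
      show "a * s a * (s x * x) * (a * s a) = a * s a"
        by (metis mult.assoc e1 x1 p2 q1)
      show "s (s x * x * (a * s a)) = s x * x * (a * s a)" using e1 x3 by simp
      show "s x * x * (s x * x) * (a * s a) = s x * x"
        by (metis mult.assoc e1 x2 x3 sm)
    qed
  qed
  have L2: "is_left_dual_core_inverse s (s a * a) (x * s x)"
  proof -
    have e1: "(x * s x) * (s a * a) = x * a"
      by (metis mult.assoc p1 x2)
    show ?thesis unfolding is_left_dual_core_inverse_def
    proof (intro conjI)
      show "s a * a * (x * s x) * (s a * a) = s a * a"
        by (metis mult.assoc e1 x1)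
      show "s (x * s x * (s a * a)) = x * s x * (s a * a)" using e1 x4 by simp
      show "x * s x * (x * s x) * (s a * a) = x * s x"
        by (metis mult.assoc e1 q3)
    qed
  qed
  show ?thesis
  proof (intro conjI)
    show "\<exists>a1 a2. a * s a = a1 + a2 \<and> left_dual_core_invertible s a1 \<and> a2 * a2 = 0
            \<and> s a2 * a1 = 0 \<and> a1 * a2 = 0"
      by (rule exI[of _ "a * s a"], rule exI[of _ 0])
        (use L1 s0 in \<open>auto simp: left_dual_core_invertible_def\<close>)
    show "left_dual_core_invertible s (s a * a)" using L2 left_dual_core_invertible_def by blast
    show "is_left_dual_core_inverse s (s a * a) (MP_inv s a * s (MP_inv s a))" using L2 xe by simp
  qed
qed

end
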